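(* Let $\mathcal{X}=\mathcal{X}^{(1)}\times\cdots\times\mathcal{X}^{(d)}$ with each $\mathcal{X}^{(j)}$ finite, $(S_i)_{i=1}^n$ a partition of $\{1,\dots,d\}$ into pairwise disjoint nonempty sets, $\pi\in\mathcal{P}(\mathcal{X})$ positive and $P\in\mathcal{L}(\mathcal{X})$. Then $\mathbb{I}^\pi(P)=\mathbb{I}^\pi(P,\mathcal{L}_{\otimes_{i=1}^nS_i}(\mathcal{X}))+\mathbb{I}^\pi(\otimes_{i=1}^nP^{(S_i)}_\pi)=\mathbb{I}^\pi(P,\mathcal{L}_{\otimes_{i=1}^nS_i}(\mathcal{X}))+\sum_{i=1}^n\mathbb{I}^{\pi^{(S_i)}}(P^{(S_i)}_\pi)$.
   Context: $D_{KL}^{\pi}(M\|L):=\sum_{x,y}\pi(x)M(x,y)\ln\frac{M(x,y)}{L(x,y)}$. For $S\subseteq\{1,\dots,d\}$: $\mathcal{X}^{(S)}=\prod_{j\in S}\mathcal{X}^{(j)}$, $\pi^{(S)}(x^{(S)})=\sum_{x^{(-S)}}\pi(x)$, $P^{(S)}_\pi(x^{(S)},y^{(S)}):=\frac{\sum_{x^{(-S)},y^{(-S)}}\pi(x)P(x,y)}{\pi^{(S)}(x^{(S)})}$. Tensor products: $(\otimes_iL_i)(x,y)=\prod_iL_i(x^{(S_i)},y^{(S_i)})$. $\mathcal{L}_{\otimes_{i=1}^nS_i}(\mathcal{X})$ is the set of transition matrices of the form $\otimes_{i=1}^nL_i$ with $L_i\in\mathcal{L}(\mathcal{X}^{(S_i)})$,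 and $\mathbb{I}^\pi(P,\mathcal{L}_{\otimes_{i=1}^nS_i}(\mathcal{X})):=\min_{L_i\in\mathcal{L}(\mathcal{X}^{(S_i)})}D^\pi_{KL}(P\|\otimes_{i=1}^nL_i)$. For $\mu$ on $\prod_{j\in T}\mathcal{X}^{(j)}$ and $Q$ a transition matrix there, the distance to independence is $\mathbb{I}^\mu(Q):=\min_{L_j\in\mathcal{L}(\mathcal{X}^{(j)}),j\in T}D^\mu_{KL}(Q\|\otimes_{j\in T}L_j)$. *)

theory Defs
  imports Complex_Main "HOL-Library.FuncSet" "HOL-Library.Extended_Real"
begin

text \<open>States of the product space X^(T) = prod_{j in T} Xs j are extensional
  functions in PiE T Xs; x^(S) is restrict x S.\<close>

definition transition_matrix :: "'s set \<Rightarrow> ('s \<Rightarrow> 's \<Rightarrow> real) \<Rightarrow> bool" where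
  "transition_matrix A L \<longleftrightarrow>
     (\<forall>x\<in>A. \<forall>y\<in>A. 0 \<le> L x y) \<and> (\<forall>x\<in>A. (\<Sum>y\<in>A. L x y) = 1)"

definition prob_dist :: "'s set \<Rightarrow> ('s \<Rightarrow> real) \<Rightarrow> bool" where
  "prob_dist A p \<longleftrightarrow> (\<forall>x\<in>A. 0 \<le> p x) \<and> sum p A = 1"

definition KL_div :: "('s \<Rightarrow> real) \<Rightarrow> 's set \<Rightarrow> ('s \<Rightarrow> 's \<Rightarrow> real) \<Rightarrow> ('s \<Rightarrow> 's \<Rightarrow> real) \<Rightarrow> ereal" where
  "KL_div p A M L = (\<Sum>x\<in>A. \<Sum>y\<in>A.
      (if p x * M x y = 0 then 0
       else if L x y = 0 then \<infinity>
       else ereal (p x * M x y * ln (M x y / L x y))))"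

definition marginal :: "(nat \<Rightarrow> 'a set) \<Rightarrow> nat set \<Rightarrow> nat set \<Rightarrow> ((nat \<Rightarrow> 'a) \<Rightarrow> real) \<Rightarrow> (nat \<Rightarrow> 'a) \<Rightarrow> real" where
  "marginal Xs I S p xs = (\<Sum>x\<in>{x\<in>PiE I Xs. restrict x S = xs}. p x)"

definition marg_kernel :: "(nat \<Rightarrow> 'a set) \<Rightarrow> nat set \<Rightarrow> nat set \<Rightarrow> ((nat \<Rightarrow> 'a) \<Rightarrow> real)
     \<Rightarrow> ((nat \<Rightarrow> 'a) \<Rightarrow> (nat \<Rightarrow> 'a) \<Rightarrow> real) \<Rightarrow> (nat \<Rightarrow> 'a) \<Rightarrow> (nat \<Rightarrow> 'a) \<Rightarrow> real" where
  "marg_kernel Xs I S p P xs ys =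
     (\<Sum>x\<in>{x\<in>PiE I Xs. restrict x S = xs}. \<Sum>y\<in>{y\<in>PiE I Xs. restrict y S = ys}. p x * P x y)
     / marginal Xs I S p xs"

definition tensor :: "(nat \<Rightarrow> nat set) \<Rightarrow> nat \<Rightarrow> (nat \<Rightarrow> (nat \<Rightarrow> 'a) \<Rightarrow> (nat \<Rightarrow> 'a) \<Rightarrow> real)
     \<Rightarrow> (nat \<Rightarrow> 'a) \<Rightarrow> (nat \<Rightarrow> 'a) \<Rightarrow> real" where
  "tensor S n Ls x y = (\<Prod>i\<in>{1..n}. Ls i (restrict x (S i)) (restrict y (S i)))"

text \<open>I^pi(P, L_{otimes S_i}(X)) (minimum written as infimum; it is attained).\<close>
definition I_part :: "(nat \<Rightarrow> 'a set) \<Rightarrow> nat set \<Rightarrow> ((nat \<Rightarrow> 'a) \<Rightarrow> real)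
     \<Rightarrow> ((nat \<Rightarrow> 'a) \<Rightarrow> (nat \<Rightarrow> 'a) \<Rightarrow> real) \<Rightarrow> (nat \<Rightarrow> nat set) \<Rightarrow> nat \<Rightarrow> ereal" where
  "I_part Xs I p P S n = Inf {KL_div p (PiE I Xs) P (tensor S n Ls) | Ls.
       \<forall>i\<in>{1..n}. transition_matrix (PiE (S i) Xs) (Ls i)}"

definition dist_indep :: "(nat \<Rightarrow> 'a set) \<Rightarrow> nat set \<Rightarrow> ((nat \<Rightarrow> 'a) \<Rightarrow> real)
     \<Rightarrow> ((nat \<Rightarrow> 'a) \<Rightarrow> (nat \<Rightarrow> 'a) \<Rightarrow> real) \<Rightarrow> ereal" where
  "dist_indep Xs T mu Q = Inf {KL_div mu (PiE T Xs) Q (\<lambda>x y. \<Prod>j\<in>T. Ls j (x j) (y j)) | Ls.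
       \<forall>j\<in>T. transition_matrix (Xs j) (Ls j)}"

end

theory Submission
  imports Defs
begin


lemma sum_not_minf:
  fixes f :: "'b \<Rightarrow> ereal"
  assumes "\<forall>a\<in>A. f a \<noteq> -\<infinity>"
  shows "sum f A \<noteq> -\<infinity>"
  using assms by (induction A rule: infinite_finite_induct) auto

lemma KL_not_minf: "KL_div p A M L \<noteq> -\<infinity>"
  unfolding KL_div_def by (intro sum_not_minf ballI) auto

lemma KL_good:
  assumes "\<forall>x\<in>A. \<forall>y\<in>A. p x * M x y \<noteq> 0 \<longrightarrow> L x y \<noteq> 0"
  shows "KL_div p A M L = ereal (\<Sum>x\<in>A. \<Sum>y\<in>A. if p x * M x y = 0 then 0 else p x * M x y * ln (M x y / L x y))"
proof -
  have "KL_div p A M L = (\<Sum>x\<in>A. \<Sum>y\<in>A. ereal (if p x * M x y = 0 then 0 else p x * M x y * ln (M x y / L x y)))"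
    unfolding KL_div_def using assms by (intro sum.cong refl) auto
  then show ?thesis by simp
qed

lemma KL_bad:
  assumes "finite A" "x \<in> A" "y \<in> A" "p x * M x y \<noteq> 0" "L x y = 0"
  shows "KL_div p A M L = \<infinity>"
proof -
  have "(\<Sum>y\<in>A. (if p x * M x y = 0 then 0
       else if L x y = 0 then \<infinity> else ereal (p x * M x y * ln (M x y / L x y)))) = \<infinity>"
    using assms by (subst sum_Pinfty) auto
  then show ?thesis unfolding KL_div_def using assms by (subst sum_Pinfty) (auto intro!: bexI[of _ x])
qed

lemma KL_self: "KL_div p A M M = 0"
  unfolding KL_div_def by (intro sum.neutral ballI) auto

lemma xlnx_ineq:
  fixes q l :: real
  assumes "q > 0" "l > 0"
  shows "q * ln (q / l) \<ge> q - l"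
proof -
  have "ln (l / q) \<le> l / q - 1" using assms by (intro ln_le_minus_one) auto
  moreover have "ln (q / l) = - ln (l / q)" using assms by (simp add: ln_div)
  ultimately have "ln (q / l) \<ge> 1 - l / q" by linarith
  then have "q * ln (q / l) \<ge> q * (1 - l / q)" using assms by (intro mult_left_mono) auto
  also have "q * (1 - l / q) = q - l" using assms by (simp add: field_simps)
  finally show ?thesis .
qed

lemma KL_nonneg:
  assumes fA: "finite A" and mu_nn: "\<forall>x\<in>A. 0 \<le> mu x" and Q_nn: "\<forall>x\<in>A. \<forall>y\<in>A. 0 \<le> Q x y"
    and Q_row: "\<forall>x\<in>A. 0 < mu x \<longrightarrow> sum (Q x) A = 1" and L_tm: "transition_matrix A L"
  shows "0 \<le> KL_div mu A Q L"
proof (cases "\<forall>x\<in>A. \<forall>y\<in>A. mu x * Q x y \<noteq> 0 \<longrightarrow> L x y \<noteq> 0")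
  case False
  then obtain x y where "x \<in> A" "y \<in> A" "mu x * Q x y \<noteq> 0" "L x y = 0" by blast
  then show ?thesis using KL_bad[OF fA] by simp
next
  case True
  have "0 \<le> (\<Sum>x\<in>A. \<Sum>y\<in>A. if mu x * Q x y = 0 then 0 else mu x * Q x y * ln (Q x y / L x y))"
  proof (rule sum_nonneg)
    fix x assume x: "x \<in> A"
    show "0 \<le> (\<Sum>y\<in>A. if mu x * Q x y = 0 then 0 else mu x * Q x y * ln (Q x y / L x y))"
    proof (cases "mu x = 0")
      case True then show ?thesis by simp
    next
      case False
      then have mup: "mu x > 0" using mu_nn x by force
      have "(\<Sum>y\<in>A. mu x * (Q x y - L x y)) \<le> (\<Sum>y\<in>A. if mu x * Q x y = 0 then 0 else mu x * Q x y * ln (Q x y / L x y))"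
      proof (intro sum_mono)
        fix y assume y: "y \<in> A"
        have Lnn: "0 \<le> L x y" using L_tm x y unfolding transition_matrix_def by auto
        show "mu x * (Q x y - L x y) \<le> (if mu x * Q x y = 0 then 0 else mu x * Q x y * ln (Q x y / L x y))"
        proof (cases "Q x y = 0")
          case True then show ?thesis using mup Lnn by simp
        next
          case False
          then have qp: "Q x y > 0" using Q_nn x y by force
          have "L x y \<noteq> 0" using True x y mup qp by auto
          then have lp: "L x y > 0" using Lnn by auto
          have "mu x * (Q x y - L x y) \<le> mu x * (Q x y * ln (Q x y / L x y))"
            using xlnx_ineq[OF qp lp] mup by (intro mult_left_mono) auto
          then show ?thesis using mup qp by (simp add: mult.assoc)
        qed
      qed
      moreover have "(\<Sum>y\<in>A. mu x * (Q x y - L x y)) = 0"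
        using Q_row L_tm x mup unfolding transition_matrix_def
        by (simp add: sum_distrib_left[symmetric] sum_subtractf)
      ultimately show ?thesis by simp
    qed
  qed
  then show ?thesis using KL_good[OF True] by simp
qed

lemma prod_tm:
  assumes "finite T" "\<forall>j\<in>T. finite (Xs j)" "\<forall>j\<in>T. transition_matrix (Xs j) (L j)"
  shows "transition_matrix (PiE T Xs) (\<lambda>a b. \<Prod>j\<in>T. L j (a j) (b j))"
  unfolding transition_matrix_def
proof safe
  fix a b assume a: "a \<in> PiE T Xs" and b: "b \<in> PiE T Xs"
  show "0 \<le> (\<Prod>j\<in>T. L j (a j) (b j))"
    using assms a b unfolding transition_matrix_def by (intro prod_nonneg) (auto simp: PiE_iff)
next
  fix a assume a: "a \<in> PiE T Xs"
  have "(\<Sum>b\<in>PiE T Xs. \<Prod>j\<in>T. L j (a j) (b j)) = (\<Prod>j\<in>T. \<Sum>c\<in>Xs j. L j (a j) c)"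
    using assms by (subst prod_sum_PiE) auto
  also have "\<dots> = 1" using assms a unfolding transition_matrix_def by (intro prod.neutral) (auto simp: PiE_iff)
  finally show "(\<Sum>b\<in>PiE T Xs. \<Prod>j\<in>T. L j (a j) (b j)) = 1" .
qed




locale blocks =
  fixes Xs :: "nat \<Rightarrow> 'a set" and d n :: nat and S :: "nat \<Rightarrow> nat set"
    and p :: "(nat \<Rightarrow> 'a) \<Rightarrow> real"
  assumes fin: "\<forall>j\<in>{1..d}. finite (Xs j)"
    and S_disjoint: "\<forall>i\<in>{1..n}. \<forall>k\<in>{1..n}. i \<noteq> k \<longrightarrow> S i \<inter> S k = {}"
    and S_cover: "(\<Union>i\<in>{1..n}. S i) = {1..d}"
    and p_dist: "prob_dist (PiE {1..d} Xs) p"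
    and p_pos: "\<forall>x\<in>PiE {1..d} Xs. 0 < p x"
begin

abbreviation "Om \<equiv> PiE {1..d} Xs"
abbreviation "Omb i \<equiv> PiE (S i) Xs"
definition fib where "fib i a = {x\<in>Om. restrict x (S i) = a}"
abbreviation "mu i \<equiv> marginal Xs {1..d} (S i) p"
abbreviation "mk i R \<equiv> marg_kernel Xs {1..d} (S i) p R"
definition N where "N i R a b = (\<Sum>x\<in>fib i a. \<Sum>y\<in>fib i b. p x * R x y)"
definition blk where "blk j = (THE k. k \<in> {1..n} \<and> j \<in> S k)"

lemma finite_Om: "finite Om"
  using fin by (intro finite_PiE) auto

lemma Om_ne: "Om \<noteq> {}"
  using p_dist unfolding prob_dist_def by auto

lemma Xs_ne: "j \<in> {1..d} \<Longrightarrow> Xs j \<noteq> {}"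
  using Om_ne PiE_eq_empty_iff by metis

lemma S_sub: "i \<in> {1..n} \<Longrightarrow> S i \<subseteq> {1..d}"
proof -
  assume "i \<in> {1..n}"
  then have "S i \<subseteq> (\<Union>i\<in>{1..n}. S i)" by (rule UN_upper)
  then show ?thesis by (simp only: S_cover)
qed

lemma finite_S: "i \<in> {1..n} \<Longrightarrow> finite (S i)"
  by (rule finite_subset[OF S_sub]) simp_all

lemma finite_Omb: "i \<in> {1..n} \<Longrightarrow> finite (Omb i)"
proof -
  assume i: "i \<in> {1..n}"
  show ?thesis
  proof (rule finite_PiE[OF finite_S[OF i]])
    fix j assume "j \<in> S i"
    then have "j \<in> {1..d}" using S_sub[OF i] by blast
    then show "finite (Xs j)" using fin by blast
  qed
qed

lemma r_in: "x \<in> Om \<Longrightarrow> i \<in> {1..n} \<Longrightarrow> restrict x (S i) \<in> Omb i"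
  using S_sub[of i] by (auto simp: PiE_iff)

lemma fib_sub: "fib i a \<subseteq> Om" unfolding fib_def by auto

lemma fib_mem: "x \<in> fib i a \<Longrightarrow> x \<in> Om" unfolding fib_def by auto

lemma finite_fib: "finite (fib i a)" by (rule finite_subset[OF fib_sub finite_Om])

lemma extend:
  assumes i: "i \<in> {1..n}" and a: "a \<in> Omb i"
  shows "\<exists>x\<in>Om. restrict x (S i) = a"
proof -
  define x where "x = (\<lambda>j\<in>{1..d}. if j \<in> S i then a j else (SOME z. z \<in> Xs j))"
  have "x \<in> Om"
    using a Xs_ne unfolding x_def by (auto simp: PiE_iff some_in_eq)
  moreover have "restrict x (S i) = a"
  proof
    fix j show "restrict x (S i) j = a j"
      using a S_sub[OF i] unfolding x_def by (cases "j \<in> S i") (auto simp: PiE_iff extensional_def)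
  qed
  ultimately show ?thesis by blast
qed

lemma mu_eq: "mu i a = sum p (fib i a)"
  unfolding marginal_def fib_def by simp

lemma mu_nonneg: "0 \<le> mu i a"
  unfolding mu_eq
proof (rule sum_nonneg)
  fix x assume "x \<in> fib i a"
  then have "x \<in> Om" using fib_sub by blast
  then show "0 \<le> p x" using p_pos by (simp add: less_imp_le)
qed

lemma mu_pos: "i \<in> {1..n} \<Longrightarrow> a \<in> Omb i \<Longrightarrow> 0 < mu i a"
proof -
  assume i: "i \<in> {1..n}" and a: "a \<in> Omb i"
  obtain x where x: "x \<in> Om" "restrict x (S i) = a" using extend[OF i a] by blast
  then have "x \<in> fib i a" unfolding fib_def by auto
  then show "0 < mu i a" unfolding mu_eq using p_pos fib_sub finite_fib
    by (intro sum_pos2[where i=x]) (auto simp: less_imp_le subset_iff)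
qed

lemma mu_pos_r: "x \<in> Om \<Longrightarrow> i \<in> {1..n} \<Longrightarrow> 0 < mu i (restrict x (S i))"
  using mu_pos r_in by blast

lemma mk_eq: "mk i R a b = N i R a b / mu i a"
  unfolding marg_kernel_def N_def fib_def by simp

lemma N_eq: "i \<in> {1..n} \<Longrightarrow> a \<in> Omb i \<Longrightarrow> mu i a * mk i R a b = N i R a b"
  unfolding mk_eq using mu_pos[of i a] by simp

lemma N_nonneg: "\<forall>x\<in>Om. \<forall>y\<in>Om. 0 \<le> R x y \<Longrightarrow> 0 \<le> N i R a b"
  unfolding N_def using fib_mem p_pos
  by (intro sum_nonneg mult_nonneg_nonneg) (auto simp: less_imp_le)

lemma mk_nonneg: "\<forall>x\<in>Om. \<forall>y\<in>Om. 0 \<le> R x y \<Longrightarrow> 0 \<le> mk i R a b"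
  unfolding mk_eq using N_nonneg mu_nonneg by simp

lemma sum_fib:
  assumes i: "i \<in> {1..n}"
  shows "(\<Sum>a\<in>Omb i. \<Sum>x\<in>fib i a. g x) = (\<Sum>x\<in>Om. g x)"
proof -
  have "(\<lambda>x. restrict x (S i)) ` Om \<subseteq> Omb i" using r_in[OF _ i] by blast
  from sum.group[OF finite_Om finite_Omb[OF i] this, of g] show ?thesis unfolding fib_def by simp
qed

lemma mk_row:
  assumes i: "i \<in> {1..n}" and a: "a \<in> Omb i" and R: "transition_matrix Om R"
  shows "sum (mk i R a) (Omb i) = 1"
proof -
  have "(\<Sum>b\<in>Omb i. N i R a b) = (\<Sum>x\<in>fib i a. p x * (\<Sum>b\<in>Omb i. \<Sum>y\<in>fib i b. R x y))"
    unfolding N_def by (subst sum.swap) (simp add: sum_distrib_left)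
  also have "\<dots> = (\<Sum>x\<in>fib i a. p x)"
    using R fib_mem unfolding sum_fib[OF i] transition_matrix_def by (intro sum.cong) auto
  also have "\<dots> = mu i a" by (rule mu_eq[symmetric])
  finally show ?thesis using mu_pos[OF i a] unfolding mk_eq by (simp add: sum_divide_distrib[symmetric])
qed

lemma mk_tm:
  assumes i: "i \<in> {1..n}" and R: "transition_matrix Om R"
  shows "transition_matrix (Omb i) (mk i R)"
  using mk_row[OF i _ R] mk_nonneg[of R] R unfolding transition_matrix_def by auto

lemma pR_le_N:
  assumes i: "i \<in> {1..n}" and x: "x \<in> Om" and y: "y \<in> Om" and R: "\<forall>x\<in>Om. \<forall>y\<in>Om. 0 \<le> R x y"
  shows "p x * R x y \<le> N i R (restrict x (S i)) (restrict y (S i))"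
proof -
  have xf: "x \<in> fib i (restrict x (S i))" and yf: "y \<in> fib i (restrict y (S i))"
    using x y unfolding fib_def by auto
  have nn: "\<And>x' y'. x' \<in> Om \<Longrightarrow> y' \<in> Om \<Longrightarrow> 0 \<le> p x' * R x' y'"
    using R p_pos by (intro mult_nonneg_nonneg) (auto intro: less_imp_le)
  have "p x * R x y \<le> (\<Sum>y'\<in>fib i (restrict y (S i)). p x * R x y')"
    using yf nn x fib_mem finite_fib by (intro member_le_sum) auto
  also have "\<dots> \<le> N i R (restrict x (S i)) (restrict y (S i))"
    unfolding N_def using xf nn fib_mem finite_fib
    by (intro member_le_sum[of x] sum_nonneg) auto
  finally show ?thesis .
qed

lemma N_witness:
  assumes "N i R a b \<noteq> 0"
  shows "\<exists>x\<in>fib i a. \<exists>y\<in>fib i b. p x * R x y \<noteq> 0"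
  using assms unfolding N_def by (meson sum.neutral)

lemma blk:
  assumes j: "j \<in> {1..d}"
  shows "blk j \<in> {1..n} \<and> j \<in> S (blk j)"
proof -
  obtain k where k: "k \<in> {1..n}" "j \<in> S k" using j S_cover by blast
  have "\<And>k'. k' \<in> {1..n} \<and> j \<in> S k' \<Longrightarrow> k' = k" using k S_disjoint by blast
  then have "blk j = k" unfolding blk_def using k by (intro the_equality) auto
  then show ?thesis using k by simp
qed

lemma blk_eq: "k \<in> {1..n} \<Longrightarrow> j \<in> S k \<Longrightarrow> blk j = k"
  using blk S_disjoint S_sub by blast

lemma sum_prod_blocks:
  fixes f :: "nat \<Rightarrow> (nat \<Rightarrow> 'a) \<Rightarrow> real"
  shows   "(\<Sum>y\<in>Om. \<Prod>k\<in>{1..n}. f k (restrict y (S k))) = (\<Prod>k\<in>{1..n}. \<Sum>c\<in>Omb k. f k c)"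
proof -
  have "(\<Prod>k\<in>{1..n}. \<Sum>c\<in>Omb k. f k c) = (\<Sum>g\<in>PiE {1..n} Omb. \<Prod>k\<in>{1..n}. f k (g k))"
    using finite_Omb by (intro prod_sum_PiE) auto
  also have "\<dots> = (\<Sum>y\<in>Om. \<Prod>k\<in>{1..n}. f k (restrict y (S k)))"
  proof (rule sum.reindex_bij_witness[of _ "\<lambda>y. \<lambda>k\<in>{1..n}. restrict y (S k)" "\<lambda>g. \<lambda>j\<in>{1..d}. g (blk j) j"])
    fix y assume y: "y \<in> Om"
    show "(\<lambda>j\<in>{1..d}. (\<lambda>k\<in>{1..n}. restrict y (S k)) (blk j) j) = y"
      using y blk by (auto simp: PiE_iff extensional_def)
    show "(\<lambda>k\<in>{1..n}. restrict y (S k)) \<in> PiE {1..n} Omb"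
      using y r_in by auto
  next
    fix g assume g: "g \<in> PiE {1..n} Omb"
    have rg: "restrict (\<lambda>j\<in>{1..d}. g (blk j) j) (S k) = g k" if k: "k \<in> {1..n}" for k
    proof
      fix j show "restrict (\<lambda>j\<in>{1..d}. g (blk j) j) (S k) j = g k j"
        using g k S_sub[OF k] blk_eq[OF k] by (cases "j \<in> S k") (auto simp: PiE_iff extensional_def)
    qed
    show "(\<lambda>k\<in>{1..n}. restrict (\<lambda>j\<in>{1..d}. g (blk j) j) (S k)) = g"
      using g rg by (auto simp: PiE_iff extensional_def)
    show "(\<lambda>j\<in>{1..d}. g (blk j) j) \<in> Om"
      using g blk by (auto simp: PiE_iff)
    show "(\<Prod>k\<in>{1..n}. f k (restrict (\<lambda>j\<in>{1..d}. g (blk j) j) (S k))) = (\<Prod>k\<in>{1..n}. f k (g k))"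
      using rg by (intro prod.cong) auto
  qed
  finally show ?thesis by simp
qed

lemma tensor_singletons:
  fixes L :: "nat \<Rightarrow> 'a \<Rightarrow> 'a \<Rightarrow> real"
  shows   "(\<lambda>x y. \<Prod>j\<in>{1..d}. L j (x j) (y j)) = tensor S n (\<lambda>i a b. \<Prod>j\<in>S i. L j (a j) (b j))"
proof (intro ext)
  fix x y :: "nat \<Rightarrow> 'a"
  have "(\<Prod>j\<in>{1..d}. L j (x j) (y j)) = (\<Prod>j\<in>(\<Union>i\<in>{1..n}. S i). L j (x j) (y j))"
    using S_cover by simp
  also have "\<dots> = (\<Prod>i\<in>{1..n}. \<Prod>j\<in>S i. L j (x j) (y j))"
    using finite_S S_disjoint by (intro prod.UNION_disjoint) auto
  also have "\<dots> = tensor S n (\<lambda>i a b. \<Prod>j\<in>S i. L j (a j) (b j)) x y"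
    unfolding tensor_def by (intro prod.cong refl) auto
  finally show "(\<Prod>j\<in>{1..d}. L j (x j) (y j)) = tensor S n (\<lambda>i a b. \<Prod>j\<in>S i. L j (a j) (b j)) x y" .
qed

end



context blocks
begin

lemma fiber_double:
  fixes g :: "(nat \<Rightarrow> 'a) \<Rightarrow> (nat \<Rightarrow> 'a) \<Rightarrow> real" and h :: "(nat \<Rightarrow> 'a) \<Rightarrow> (nat \<Rightarrow> 'a) \<Rightarrow> real"
  assumes i: "i \<in> {1..n}"
  shows "(\<Sum>x\<in>Om. \<Sum>y\<in>Om. g x y * h (restrict x (S i)) (restrict y (S i)))
       = (\<Sum>a\<in>Omb i. \<Sum>b\<in>Omb i. h a b * (\<Sum>x\<in>fib i a. \<Sum>y\<in>fib i b. g x y))"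
proof -
  have "(\<Sum>x\<in>Om. \<Sum>y\<in>Om. g x y * h (restrict x (S i)) (restrict y (S i)))
      = (\<Sum>x\<in>Om. \<Sum>b\<in>Omb i. \<Sum>y\<in>fib i b. g x y * h (restrict x (S i)) (restrict y (S i)))"
    by (rule sum.cong[OF refl]) (rule sum_fib[OF i, symmetric])
  also have "\<dots> = (\<Sum>a\<in>Omb i. \<Sum>x\<in>fib i a. \<Sum>b\<in>Omb i. \<Sum>y\<in>fib i b. g x y * h (restrict x (S i)) (restrict y (S i)))"
    by (rule sum_fib[OF i, symmetric])
  also have "\<dots> = (\<Sum>a\<in>Omb i. \<Sum>x\<in>fib i a. \<Sum>b\<in>Omb i. \<Sum>y\<in>fib i b. g x y * h a b)"
    by (intro sum.cong refl) (auto simp: fib_def)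
  also have "\<dots> = (\<Sum>a\<in>Omb i. \<Sum>b\<in>Omb i. h a b * (\<Sum>x\<in>fib i a. \<Sum>y\<in>fib i b. g x y))"
  proof (rule sum.cong[OF refl])
    fix a
    show "(\<Sum>x\<in>fib i a. \<Sum>b\<in>Omb i. \<Sum>y\<in>fib i b. g x y * h a b) = (\<Sum>b\<in>Omb i. h a b * (\<Sum>x\<in>fib i a. \<Sum>y\<in>fib i b. g x y))"
      by (subst sum.swap) (simp add: sum_distrib_left mult.commute)
  qed
  finally show ?thesis .
qed

lemma pythag:
  fixes R :: "(nat \<Rightarrow> 'a) \<Rightarrow> (nat \<Rightarrow> 'a) \<Rightarrow> real" and L :: "nat \<Rightarrow> (nat \<Rightarrow> 'a) \<Rightarrow> (nat \<Rightarrow> 'a) \<Rightarrow> real"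
  assumes R_nn: "\<forall>x\<in>Om. \<forall>y\<in>Om. 0 \<le> R x y"
    and L_nn: "\<forall>i\<in>{1..n}. \<forall>a\<in>Omb i. \<forall>b\<in>Omb i. 0 \<le> L i a b"
  shows "KL_div p Om R (tensor S n L) = KL_div p Om R (tensor S n (\<lambda>i. mk i R))
           + (\<Sum>i\<in>{1..n}. KL_div (mu i) (Omb i) (mk i R) (L i))"
proof -
  have pRpos: "0 < p x * R x y" if x: "x \<in> Om" and y: "y \<in> Om" and nz: "p x * R x y \<noteq> 0" for x y
  proof -
    have "0 \<le> p x * R x y" using R_nn p_pos x y by (simp add: less_imp_le)
    then show ?thesis using nz by (metis order_le_neq_trans)
  qed
  have Rpos: "0 < R x y" if x: "x \<in> Om" and y: "y \<in> Om" and nz: "p x * R x y \<noteq> 0" for x y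
    using pRpos[OF x y nz] p_pos[rule_format, OF x] by (auto simp: zero_less_mult_iff)
  have key: "0 < mk i R (restrict x (S i)) (restrict y (S i))
      \<and> mu i (restrict x (S i)) * mk i R (restrict x (S i)) (restrict y (S i)) \<noteq> 0"
    if x: "x \<in> Om" and y: "y \<in> Om" and i: "i \<in> {1..n}" and nz: "p x * R x y \<noteq> 0" for x y i
  proof -
    have "p x * R x y \<le> N i R (restrict x (S i)) (restrict y (S i))" by (rule pR_le_N[OF i x y R_nn])
    then have Np: "0 < N i R (restrict x (S i)) (restrict y (S i))" using pRpos[OF x y nz] by linarith
    have mp: "0 < mu i (restrict x (S i))" by (rule mu_pos_r[OF x i])
    have "mu i (restrict x (S i)) * mk i R (restrict x (S i)) (restrict y (S i)) = N i R (restrict x (S i)) (restrict y (S i))"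
      by (rule N_eq[OF i r_in[OF x i]])
    moreover have "0 < mk i R (restrict x (S i)) (restrict y (S i))"
      unfolding mk_eq using Np mp by simp
    ultimately show ?thesis using Np by simp
  qed
  have D0_good: "\<forall>x\<in>Om. \<forall>y\<in>Om. p x * R x y \<noteq> 0 \<longrightarrow> tensor S n (\<lambda>i. mk i R) x y \<noteq> 0"
  proof (intro ballI impI)
    fix x y assume x: "x \<in> Om" and y: "y \<in> Om" and nz: "p x * R x y \<noteq> 0"
    show "tensor S n (\<lambda>i. mk i R) x y \<noteq> 0"
      unfolding tensor_def using key[OF x y _ nz] by (subst prod_zero_iff) auto
  qed
  show ?thesis
  proof (cases "\<forall>x\<in>Om. \<forall>y\<in>Om. p x * R x y \<noteq> 0 \<longrightarrow> tensor S n L x y \<noteq> 0")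
    case False
    then obtain x y where x: "x \<in> Om" and y: "y \<in> Om" and nz: "p x * R x y \<noteq> 0"
      and z: "tensor S n L x y = 0" by blast
    have lhs: "KL_div p Om R (tensor S n L) = \<infinity>" using KL_bad[of Om x y p R "tensor S n L"] finite_Om x y nz z by blast
    from z obtain i where i: "i \<in> {1..n}" and Lz: "L i (restrict x (S i)) (restrict y (S i)) = 0"
      unfolding tensor_def by (subst (asm) prod_zero_iff) auto
    have "KL_div (mu i) (Omb i) (mk i R) (L i) = \<infinity>"
      by (rule KL_bad[OF finite_Omb[OF i] r_in[OF x i] r_in[OF y i]]) (use key[OF x y i nz] Lz in auto)
    then have "(\<Sum>i\<in>{1..n}. KL_div (mu i) (Omb i) (mk i R) (L i)) = \<infinity>"
      using i by (subst sum_Pinfty) auto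
    moreover have "KL_div p Om R (tensor S n (\<lambda>i. mk i R)) \<noteq> -\<infinity>" by (rule KL_not_minf)
    ultimately show ?thesis using lhs by simp
  next
    case True
    have Lpos: "0 < L i (restrict x (S i)) (restrict y (S i))"
      if x: "x \<in> Om" and y: "y \<in> Om" and i: "i \<in> {1..n}" and nz: "p x * R x y \<noteq> 0" for x y i
    proof -
      have "tensor S n L x y \<noteq> 0" using True x y nz by blast
      then have "L i (restrict x (S i)) (restrict y (S i)) \<noteq> 0"
        unfolding tensor_def using i by (subst (asm) prod_zero_iff) auto
      moreover have "0 \<le> L i (restrict x (S i)) (restrict y (S i))"
        using L_nn i r_in[OF x i] r_in[OF y i] by blast
      ultimately show ?thesis by simp
    qed
    have blk_good: "\<forall>a\<in>Omb i. \<forall>b\<in>Omb i. mu i a * mk i R a b \<noteq> 0 \<longrightarrow> L i a b \<noteq> 0"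
      if i: "i \<in> {1..n}" for i
    proof (intro ballI impI)
      fix a b assume a: "a \<in> Omb i" and b: "b \<in> Omb i" and nz: "mu i a * mk i R a b \<noteq> 0"
      have "N i R a b = mu i a * mk i R a b" by (rule N_eq[OF i a, symmetric])
      then have "N i R a b \<noteq> 0" using nz by argo
      then obtain x y where xf: "x \<in> fib i a" and yf: "y \<in> fib i b" and pnz: "p x * R x y \<noteq> 0"
        using N_witness by blast
      then have "x \<in> Om" "restrict x (S i) = a" "y \<in> Om" "restrict y (S i) = b" by (auto simp: fib_def)
      then show "L i a b \<noteq> 0" using Lpos[of x y i] i pnz by force
    qed
    define h where "h i a b = (if mu i a * mk i R a b = 0 then 0 else ln (mk i R a b / L i a b))" for i a b
    have Zi: "(\<Sum>a\<in>Omb i. \<Sum>b\<in>Omb i. if mu i a * mk i R a b = 0 then 0 else mu i a * mk i R a b * ln (mk i R a b / L i a b))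
        = (\<Sum>x\<in>Om. \<Sum>y\<in>Om. p x * R x y * h i (restrict x (S i)) (restrict y (S i)))"
      if i: "i \<in> {1..n}" for i
    proof -
      have "(\<Sum>a\<in>Omb i. \<Sum>b\<in>Omb i. if mu i a * mk i R a b = 0 then 0 else mu i a * mk i R a b * ln (mk i R a b / L i a b))
          = (\<Sum>a\<in>Omb i. \<Sum>b\<in>Omb i. h i a b * N i R a b)"
        by (intro sum.cong refl) (auto simp: h_def N_eq[OF i, symmetric])
      also have "\<dots> = (\<Sum>x\<in>Om. \<Sum>y\<in>Om. p x * R x y * h i (restrict x (S i)) (restrict y (S i)))"
        unfolding N_def by (rule fiber_double[OF i, symmetric])
      finally show ?thesis .
    qed
    have pt: "(if p x * R x y = 0 then 0 else p x * R x y * ln (R x y / tensor S n L x y))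
        = (if p x * R x y = 0 then 0 else p x * R x y * ln (R x y / tensor S n (\<lambda>i. mk i R) x y))
          + (\<Sum>i\<in>{1..n}. p x * R x y * h i (restrict x (S i)) (restrict y (S i)))"
      if x: "x \<in> Om" and y: "y \<in> Om" for x y
    proof (cases "p x * R x y = 0")
      case True then show ?thesis by (simp del: mult_eq_0_iff)
    next
      case False
      have Rp: "0 < R x y" by (rule Rpos[OF x y False])
      have hi: "h i (restrict x (S i)) (restrict y (S i))
          = ln (mk i R (restrict x (S i)) (restrict y (S i))) - ln (L i (restrict x (S i)) (restrict y (S i)))"
        if i: "i \<in> {1..n}" for i
        using key[OF x y i False] Lpos[OF x y i False] unfolding h_def by (simp add: ln_div)
      have tL: "ln (R x y / tensor S n L x y) = ln (R x y) - (\<Sum>i\<in>{1..n}. ln (L i (restrict x (S i)) (restrict y (S i))))"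
      proof -
        have "0 < tensor S n L x y" unfolding tensor_def using Lpos[OF x y _ False] by (intro prod_pos) auto
        then have "ln (R x y / tensor S n L x y) = ln (R x y) - ln (tensor S n L x y)" using Rp by (simp add: ln_div)
        also have "ln (tensor S n L x y) = (\<Sum>i\<in>{1..n}. ln (L i (restrict x (S i)) (restrict y (S i))))"
        proof -
          have "\<And>i. i \<in> {1..n} \<Longrightarrow> L i (restrict x (S i)) (restrict y (S i)) \<noteq> 0"
            using Lpos[OF x y _ False] by (metis order_less_irrefl)
          then show ?thesis unfolding tensor_def by (subst ln_prod) auto
        qed
        finally show ?thesis .
      qed
      have tQ: "ln (R x y / tensor S n (\<lambda>i. mk i R) x y) = ln (R x y) - (\<Sum>i\<in>{1..n}. ln (mk i R (restrict x (S i)) (restrict y (S i))))"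
      proof -
        have "0 < tensor S n (\<lambda>i. mk i R) x y" unfolding tensor_def using key[OF x y _ False] by (intro prod_pos) auto
        then have "ln (R x y / tensor S n (\<lambda>i. mk i R) x y) = ln (R x y) - ln (tensor S n (\<lambda>i. mk i R) x y)" using Rp by (simp add: ln_div)
        also have "ln (tensor S n (\<lambda>i. mk i R) x y) = (\<Sum>i\<in>{1..n}. ln (mk i R (restrict x (S i)) (restrict y (S i))))"
        proof -
          have "\<And>i. i \<in> {1..n} \<Longrightarrow> mk i R (restrict x (S i)) (restrict y (S i)) \<noteq> 0"
            using key[OF x y _ False] by (metis order_less_irrefl)
          then show ?thesis unfolding tensor_def by (subst ln_prod) auto
        qed
        finally show ?thesis .
      qed
      have H: "(\<Sum>i\<in>{1..n}. p x * R x y * h i (restrict x (S i)) (restrict y (S i)))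
          = p x * R x y * ((\<Sum>i\<in>{1..n}. ln (mk i R (restrict x (S i)) (restrict y (S i))))
              - (\<Sum>i\<in>{1..n}. ln (L i (restrict x (S i)) (restrict y (S i)))))"
        by (simp add: hi sum_subtractf sum_distrib_left[symmetric])
      have "p x * R x y * ln (R x y / tensor S n L x y) = p x * R x y * ln (R x y / tensor S n (\<lambda>i. mk i R) x y)
          + (\<Sum>i\<in>{1..n}. p x * R x y * h i (restrict x (S i)) (restrict y (S i)))"
        unfolding tL tQ H by (simp only: right_diff_distrib)
      then show ?thesis using False by (simp only: if_False)
    qed
    have "(\<Sum>x\<in>Om. \<Sum>y\<in>Om. if p x * R x y = 0 then 0 else p x * R x y * ln (R x y / tensor S n L x y))
        = (\<Sum>x\<in>Om. \<Sum>y\<in>Om. (if p x * R x y = 0 then 0 else p x * R x y * ln (R x y / tensor S n (\<lambda>i. mk i R) x y))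
          + (\<Sum>i\<in>{1..n}. p x * R x y * h i (restrict x (S i)) (restrict y (S i))))"
      by (rule sum.cong[OF refl], rule sum.cong[OF refl], rule pt)
    also have "\<dots> = (\<Sum>x\<in>Om. \<Sum>y\<in>Om. (if p x * R x y = 0 then 0 else p x * R x y * ln (R x y / tensor S n (\<lambda>i. mk i R) x y)))
          + (\<Sum>x\<in>Om. \<Sum>y\<in>Om. \<Sum>i\<in>{1..n}. p x * R x y * h i (restrict x (S i)) (restrict y (S i)))"
      by (simp add: sum.distrib)
    also have "(\<Sum>x\<in>Om. \<Sum>y\<in>Om. \<Sum>i\<in>{1..n}. p x * R x y * h i (restrict x (S i)) (restrict y (S i)))
        = (\<Sum>x\<in>Om. \<Sum>i\<in>{1..n}. \<Sum>y\<in>Om. p x * R x y * h i (restrict x (S i)) (restrict y (S i)))"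
      by (rule sum.cong[OF refl]) (rule sum.swap)
    also have "\<dots> = (\<Sum>i\<in>{1..n}. \<Sum>x\<in>Om. \<Sum>y\<in>Om. p x * R x y * h i (restrict x (S i)) (restrict y (S i)))"
      by (rule sum.swap)
    finally have real_eq: "(\<Sum>x\<in>Om. \<Sum>y\<in>Om. if p x * R x y = 0 then 0 else p x * R x y * ln (R x y / tensor S n L x y))
        = (\<Sum>x\<in>Om. \<Sum>y\<in>Om. (if p x * R x y = 0 then 0 else p x * R x y * ln (R x y / tensor S n (\<lambda>i. mk i R) x y)))
          + (\<Sum>i\<in>{1..n}. \<Sum>x\<in>Om. \<Sum>y\<in>Om. p x * R x y * h i (restrict x (S i)) (restrict y (S i)))" .
    have sumKL: "(\<Sum>i\<in>{1..n}. KL_div (mu i) (Omb i) (mk i R) (L i))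
        = ereal (\<Sum>i\<in>{1..n}. \<Sum>x\<in>Om. \<Sum>y\<in>Om. p x * R x y * h i (restrict x (S i)) (restrict y (S i)))"
    proof -
      have "(\<Sum>i\<in>{1..n}. KL_div (mu i) (Omb i) (mk i R) (L i))
          = (\<Sum>i\<in>{1..n}. ereal (\<Sum>x\<in>Om. \<Sum>y\<in>Om. p x * R x y * h i (restrict x (S i)) (restrict y (S i))))"
      proof (rule sum.cong[OF refl])
        fix i assume i: "i \<in> {1..n}"
        show "KL_div (mu i) (Omb i) (mk i R) (L i) = ereal (\<Sum>x\<in>Om. \<Sum>y\<in>Om. p x * R x y * h i (restrict x (S i)) (restrict y (S i)))"
          by (subst KL_good[OF blk_good[OF i]], subst Zi[OF i], rule refl)
      qed
      then show ?thesis by simp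
    qed
    show ?thesis
      unfolding KL_good[OF True] KL_good[OF D0_good] sumKL real_eq by simp
  qed
qed

end



lemma KL_cong:
  assumes "\<forall>x\<in>A. \<forall>y\<in>A. p x = p' x \<and> M x y = M' x y \<and> L x y = L' x y"
  shows "KL_div p A M L = KL_div p' A M' L'"
  unfolding KL_div_def using assms by (intro sum.cong refl) auto

lemma Inf_setcompr: "Inf {f x | x. P x} = (INF x\<in>{x. P x}. f x)"
  by (rule arg_cong[where f=Inf]) blast

context blocks
begin

lemma mk_tensor:
  fixes P :: "(nat \<Rightarrow> 'a) \<Rightarrow> (nat \<Rightarrow> 'a) \<Rightarrow> real"
  assumes P: "transition_matrix Om P" and i: "i \<in> {1..n}" and a: "a \<in> Omb i" and b: "b \<in> Omb i"
  shows "mk i (tensor S n (\<lambda>k. mk k P)) a b = mk i P a b"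
proof -
  define T where "T = tensor S n (\<lambda>k. mk k P)"
  have inner: "(\<Sum>y\<in>fib i b. T x y) = mk i P a b" if x: "x \<in> fib i a" for x
  proof -
    have xO: "x \<in> Om" and xa: "restrict x (S i) = a" using x by (auto simp: fib_def)
    define f where "f k c = (if k = i then (if c = b then mk i P a c else 0) else mk k P (restrict x (S k)) c)" for k c
    have "(\<Sum>y\<in>fib i b. T x y) = (\<Sum>y\<in>Om. if restrict y (S i) = b then T x y else 0)"
      unfolding fib_def by (rule sum.inter_filter[OF finite_Om])
    also have "\<dots> = (\<Sum>y\<in>Om. \<Prod>k\<in>{1..n}. f k (restrict y (S k)))"
    proof (rule sum.cong[OF refl])
      fix y assume y: "y \<in> Om"
      have "(\<Prod>k\<in>{1..n}. f k (restrict y (S k))) = f i (restrict y (S i)) * (\<Prod>k\<in>{1..n}-{i}. f k (restrict y (S k)))"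
        using i by (subst prod.remove) auto
      also have "(\<Prod>k\<in>{1..n}-{i}. f k (restrict y (S k))) = (\<Prod>k\<in>{1..n}-{i}. mk k P (restrict x (S k)) (restrict y (S k)))"
        unfolding f_def by (intro prod.cong refl) auto
      finally have e1: "(\<Prod>k\<in>{1..n}. f k (restrict y (S k))) = f i (restrict y (S i)) * (\<Prod>k\<in>{1..n}-{i}. mk k P (restrict x (S k)) (restrict y (S k)))" .
      have e2: "T x y = mk i P (restrict x (S i)) (restrict y (S i)) * (\<Prod>k\<in>{1..n}-{i}. mk k P (restrict x (S k)) (restrict y (S k)))"
        unfolding T_def tensor_def using i by (subst prod.remove) auto
      show "(if restrict y (S i) = b then T x y else 0) = (\<Prod>k\<in>{1..n}. f k (restrict y (S k)))"
        by (subst e1, subst e2) (simp add: f_def xa)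
    qed
    also have "\<dots> = (\<Prod>k\<in>{1..n}. \<Sum>c\<in>Omb k. f k c)" by (rule sum_prod_blocks)
    also have "\<dots> = (\<Sum>c\<in>Omb i. f i c) * (\<Prod>k\<in>{1..n}-{i}. \<Sum>c\<in>Omb k. f k c)"
      using i by (subst prod.remove) auto
    also have "(\<Sum>c\<in>Omb i. f i c) = mk i P a b"
      unfolding f_def using b finite_Omb[OF i] by simp
    also have "(\<Prod>k\<in>{1..n}-{i}. \<Sum>c\<in>Omb k. f k c) = 1"
    proof (rule prod.neutral, rule ballI)
      fix k assume k: "k \<in> {1..n} - {i}"
      then have "(\<Sum>c\<in>Omb k. f k c) = (\<Sum>c\<in>Omb k. mk k P (restrict x (S k)) c)" unfolding f_def by simp
      also have "\<dots> = 1" using mk_row[OF _ r_in[OF xO] P, of k] k by simp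
      finally show "(\<Sum>c\<in>Omb k. f k c) = 1" .
    qed
    finally show ?thesis by simp
  qed
  have "N i T a b = (\<Sum>x\<in>fib i a. p x * (\<Sum>y\<in>fib i b. T x y))"
    unfolding N_def by (simp add: sum_distrib_left)
  also have "\<dots> = (\<Sum>x\<in>fib i a. p x * mk i P a b)"
    using inner by (intro sum.cong refl) auto
  also have "\<dots> = mu i a * mk i P a b"
    unfolding mu_eq by (simp add: sum_distrib_right)
  finally have "N i T a b = mu i a * mk i P a b" .
  then have "mk i T a b = mk i P a b"
    unfolding mk_eq using mu_pos[OF i a] by simp
  then show ?thesis unfolding T_def .
qed

end



context blocks
begin

lemma main:
  fixes P :: "(nat \<Rightarrow> 'a) \<Rightarrow> (nat \<Rightarrow> 'a) \<Rightarrow> real"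
  assumes P_tm: "transition_matrix Om P"
  shows "dist_indep Xs {1..d} p P
           = I_part Xs {1..d} p P S n
             + dist_indep Xs {1..d} p (tensor S n (\<lambda>i. marg_kernel Xs {1..d} (S i) p P))
       \<and> dist_indep Xs {1..d} p P
           = I_part Xs {1..d} p P S n
             + (\<Sum>i\<in>{1..n}. dist_indep Xs (S i) (marginal Xs {1..d} (S i) p)
                                 (marg_kernel Xs {1..d} (S i) p P))"
proof -
  define T where "T = tensor S n (\<lambda>i. mk i P)"
  define D0 where "D0 = KL_div p Om P T"
  define F where "F i Ls = KL_div (mu i) (Omb i) (mk i P) (\<lambda>a b. \<Prod>j\<in>S i. Ls j (a j) (b j))"
    for i and Ls :: "nat \<Rightarrow> 'a \<Rightarrow> 'a \<Rightarrow> real"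
  define M where "M = {Ls :: nat \<Rightarrow> 'a \<Rightarrow> 'a \<Rightarrow> real. \<forall>j\<in>{1..d}. transition_matrix (Xs j) (Ls j)}"
  define U where "U j = (\<lambda>(a::'a) (b::'a). 1 / real (card (Xs j)))" for j
  have P_nn: "\<forall>x\<in>Om. \<forall>y\<in>Om. 0 \<le> P x y" using P_tm unfolding transition_matrix_def by blast
  have U_tm: "transition_matrix (Xs j) (U j)" if j: "j \<in> {1..d}" for j
  proof -
    have "finite (Xs j)" "Xs j \<noteq> {}" using fin j Xs_ne by auto
    then have "card (Xs j) > 0" by (simp add: card_gt_0_iff)
    then show ?thesis unfolding transition_matrix_def U_def by simp
  qed
  have U_M: "U \<in> M" unfolding M_def using U_tm by blast
  then have M_ne: "M \<noteq> {}" by blast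
  have mk_nn: "\<forall>x\<in>Omb i. \<forall>y\<in>Omb i. 0 \<le> mk i P x y" for i using mk_nonneg[OF P_nn] by blast
  have Lb_tm: "transition_matrix (Omb i) (\<lambda>a b. \<Prod>j\<in>S i. Ls j (a j) (b j))"
    if i: "i \<in> {1..n}" and Ls: "\<forall>j\<in>S i. transition_matrix (Xs j) (Ls j)" for i Ls
    using S_sub[OF i] fin Ls by (intro prod_tm finite_S[OF i]) auto
  have F_nn: "0 \<le> F i Ls" if i: "i \<in> {1..n}" and Ls: "\<forall>j\<in>S i. transition_matrix (Xs j) (Ls j)" for i Ls
    unfolding F_def
    by (rule KL_nonneg[OF finite_Omb[OF i] _ mk_nn _ Lb_tm[OF i Ls]])
       (use mu_nonneg mk_row[OF i _ P_tm] in auto)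
  have F_local: "F i Ls = F i Ls'" if "\<forall>j\<in>S i. Ls j = Ls' j" for i Ls Ls'
  proof -
    have "(\<lambda>a b. \<Prod>j\<in>S i. Ls j (a j) (b j)) = (\<lambda>a b. \<Prod>j\<in>S i. Ls' j (a j) (b j))"
      using that by (intro ext prod.cong) auto
    then show ?thesis unfolding F_def by simp
  qed
  have Lb_nn: "\<forall>i\<in>{1..n}. \<forall>a\<in>Omb i. \<forall>b\<in>Omb i. 0 \<le> (\<Prod>j\<in>S i. Ls j (a j) (b j))"
    if Ls: "Ls \<in> M" for Ls
    using Lb_tm[of _ Ls] Ls S_sub unfolding M_def transition_matrix_def by blast
  have decA: "KL_div p Om P (\<lambda>x y. \<Prod>j\<in>{1..d}. Ls j (x j) (y j)) = D0 + (\<Sum>i\<in>{1..n}. F i Ls)"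
    if Ls: "Ls \<in> M" for Ls
    unfolding tensor_singletons D0_def T_def F_def by (rule pythag[OF P_nn Lb_nn[OF Ls]])
  have T_nn: "\<forall>x\<in>Om. \<forall>y\<in>Om. 0 \<le> T x y"
    unfolding T_def tensor_def using mk_nonneg[OF P_nn] by (auto intro: prod_nonneg)
  have decC: "KL_div p Om T (\<lambda>x y. \<Prod>j\<in>{1..d}. Ls j (x j) (y j)) = (\<Sum>i\<in>{1..n}. F i Ls)"
    if Ls: "Ls \<in> M" for Ls
  proof -
    have "KL_div p Om T (\<lambda>x y. \<Prod>j\<in>{1..d}. Ls j (x j) (y j))
        = KL_div p Om T (tensor S n (\<lambda>i. mk i T))
          + (\<Sum>i\<in>{1..n}. KL_div (mu i) (Omb i) (mk i T) (\<lambda>a b. \<Prod>j\<in>S i. Ls j (a j) (b j)))"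
      unfolding tensor_singletons by (rule pythag[OF T_nn Lb_nn[OF Ls]])
    also have "KL_div p Om T (tensor S n (\<lambda>i. mk i T)) = KL_div p Om T T"
    proof (rule KL_cong, intro ballI conjI refl)
      fix x y assume x: "x \<in> Om" and y: "y \<in> Om"
      show "tensor S n (\<lambda>i. mk i T) x y = T x y"
        unfolding tensor_def T_def[symmetric]
        using mk_tensor[OF P_tm _ r_in[OF x] r_in[OF y]] unfolding T_def tensor_def
        by (intro prod.cong refl) auto
    qed
    also have "\<dots> = 0" by (rule KL_self)
    also have "(\<Sum>i\<in>{1..n}. KL_div (mu i) (Omb i) (mk i T) (\<lambda>a b. \<Prod>j\<in>S i. Ls j (a j) (b j)))
        = (\<Sum>i\<in>{1..n}. F i Ls)"
    proof (rule sum.cong[OF refl])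
      fix i assume i: "i \<in> {1..n}"
      show "KL_div (mu i) (Omb i) (mk i T) (\<lambda>a b. \<Prod>j\<in>S i. Ls j (a j) (b j)) = F i Ls"
        unfolding F_def using mk_tensor[OF P_tm i] unfolding T_def[symmetric]
        by (intro KL_cong) auto
    qed
    finally show ?thesis by simp
  qed
  have A_eq: "dist_indep Xs {1..d} p P = (INF Ls\<in>M. D0 + (\<Sum>i\<in>{1..n}. F i Ls))"
    unfolding dist_indep_def Inf_setcompr M_def[symmetric]
    by (rule INF_cong[OF refl]) (rule decA)
  have C_eq: "dist_indep Xs {1..d} p T = (INF Ls\<in>M. (\<Sum>i\<in>{1..n}. F i Ls))"
    unfolding dist_indep_def Inf_setcompr M_def[symmetric]
    by (rule INF_cong[OF refl]) (rule decC)
  have E_eq: "dist_indep Xs (S i) (mu i) (mk i P) = (INF Ls\<in>M. F i Ls)" if i: "i \<in> {1..n}" for i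
  proof -
    define Mi where "Mi = {Ls :: nat \<Rightarrow> 'a \<Rightarrow> 'a \<Rightarrow> real. \<forall>j\<in>S i. transition_matrix (Xs j) (Ls j)}"
    have "dist_indep Xs (S i) (mu i) (mk i P) = (INF Ls\<in>Mi. F i Ls)"
      unfolding dist_indep_def Inf_setcompr Mi_def F_def by simp
    also have "\<dots> = (INF Ls\<in>M. F i Ls)"
    proof (rule antisym)
      show "(INF Ls\<in>Mi. F i Ls) \<le> (INF Ls\<in>M. F i Ls)"
        using S_sub[OF i] unfolding M_def Mi_def by (intro INF_superset_mono) auto
      show "(INF Ls\<in>M. F i Ls) \<le> (INF Ls\<in>Mi. F i Ls)"
      proof (rule INF_greatest)
        fix Ls assume Ls: "Ls \<in> Mi"
        define Ls' where "Ls' j = (if j \<in> S i then Ls j else U j)" for j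
        have "Ls' \<in> M" using Ls U_tm unfolding M_def Mi_def Ls'_def by auto
        moreover have "F i Ls' = F i Ls" by (rule F_local) (simp add: Ls'_def)
        ultimately show "(INF Ls\<in>M. F i Ls) \<le> F i Ls" by (metis INF_lower)
      qed
    qed
    finally show ?thesis .
  qed
  have FM_nn: "0 \<le> F i Ls" if "i \<in> {1..n}" "Ls \<in> M" for i Ls
    using that S_sub unfolding M_def by (intro F_nn) auto
  have sum_INF: "K \<subseteq> {1..n} \<Longrightarrow> (INF Ls\<in>M. \<Sum>i\<in>K. F i Ls) = (\<Sum>i\<in>K. INF Ls\<in>M. F i Ls)" for K
  proof (induction K rule: infinite_finite_induct)
    case (infinite K)
    then show ?case using M_ne by simp
  next
    case empty
    then show ?case using M_ne by simp
  next
    case (insert i K)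
    have iK: "i \<in> {1..n}" "K \<subseteq> {1..n}" using insert by auto
    have "(INF Ls\<in>M. \<Sum>k\<in>insert i K. F k Ls) = (INF Ls\<in>M. F i Ls + (\<Sum>k\<in>K. F k Ls))"
      using insert by simp
    also have "\<dots> = (INF Ls\<in>M. F i Ls) + (INF Ls\<in>M. \<Sum>k\<in>K. F k Ls)"
    proof (rule INF_ereal_add_directed)
      fix Ls assume Ls: "Ls \<in> M"
      then show "0 \<le> F i Ls" using FM_nn iK by blast
      show "0 \<le> (\<Sum>k\<in>K. F k Ls)" by (rule sum_nonneg) (use FM_nn iK Ls in blast)
    next
      fix Ls1 Ls2 assume L1: "Ls1 \<in> M" and L2: "Ls2 \<in> M"
      define Ls3 where "Ls3 j = (if j \<in> S i then Ls1 j else Ls2 j)" for j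
      have "Ls3 \<in> M" using L1 L2 unfolding M_def Ls3_def by auto
      moreover have "F i Ls3 = F i Ls1" by (rule F_local) (simp add: Ls3_def)
      moreover have "(\<Sum>k\<in>K. F k Ls3) = (\<Sum>k\<in>K. F k Ls2)"
      proof (rule sum.cong[OF refl])
        fix k assume k: "k \<in> K"
        then have "k \<noteq> i" "k \<in> {1..n}" using insert iK by auto
        then have "S k \<inter> S i = {}" using S_disjoint iK by blast
        then show "F k Ls3 = F k Ls2" by (intro F_local) (auto simp: Ls3_def)
      qed
      ultimately show "\<exists>L\<in>M. F i Ls1 + (\<Sum>k\<in>K. F k Ls2) \<ge> F i L + (\<Sum>k\<in>K. F k L)"
        by (intro bexI[of _ Ls3]) auto
    qed
    also have "\<dots> = (\<Sum>k\<in>insert i K. INF Ls\<in>M. F k Ls)"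
      using insert iK by simp
    finally show ?case .
  qed
  have B_eq: "I_part Xs {1..d} p P S n = D0"
    unfolding I_part_def
  proof (rule antisym)
    have "KL_div p Om P (tensor S n (\<lambda>i. mk i P)) \<in> {KL_div p Om P (tensor S n Ls) |Ls.
       \<forall>i\<in>{1..n}. transition_matrix (Omb i) (Ls i)}"
      using mk_tm[OF _ P_tm] by blast
    then show "Inf {KL_div p Om P (tensor S n Ls) |Ls. \<forall>i\<in>{1..n}. transition_matrix (Omb i) (Ls i)} \<le> D0"
      unfolding D0_def T_def by (rule Inf_lower)
    show "D0 \<le> Inf {KL_div p Om P (tensor S n Ls) |Ls. \<forall>i\<in>{1..n}. transition_matrix (Omb i) (Ls i)}"
    proof (rule Inf_greatest)
      fix z assume "z \<in> {KL_div p Om P (tensor S n Ls) |Ls. \<forall>i\<in>{1..n}. transition_matrix (Omb i) (Ls i)}"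
      then obtain Ls where z: "z = KL_div p Om P (tensor S n Ls)"
        and Ls: "\<forall>i\<in>{1..n}. transition_matrix (Omb i) (Ls i)" by blast
      have zeq: "z = D0 + (\<Sum>i\<in>{1..n}. KL_div (mu i) (Omb i) (mk i P) (Ls i))"
        unfolding z D0_def T_def
        by (rule pythag[OF P_nn]) (use Ls in \<open>auto simp: transition_matrix_def\<close>)
      have snn: "0 \<le> (\<Sum>i\<in>{1..n}. KL_div (mu i) (Omb i) (mk i P) (Ls i))"
      proof (rule sum_nonneg)
        fix i assume i: "i \<in> {1..n}"
        show "0 \<le> KL_div (mu i) (Omb i) (mk i P) (Ls i)"
          by (rule KL_nonneg[OF finite_Omb[OF i] _ mk_nn _ Ls[rule_format, OF i]])
             (use mu_nonneg mk_row[OF i _ P_tm] in auto)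
      qed
      show "D0 \<le> z" unfolding zeq by (rule add_increasing2[OF snn order_refl])
    qed
  qed
  have AC: "dist_indep Xs {1..d} p P = D0 + dist_indep Xs {1..d} p T"
    unfolding A_eq C_eq
  proof (rule INF_ereal_add_right[OF M_ne])
    show "D0 \<noteq> -\<infinity>" unfolding D0_def by (rule KL_not_minf)
    fix Ls assume "Ls \<in> M"
    then show "0 \<le> (\<Sum>i\<in>{1..n}. F i Ls)" by (intro sum_nonneg FM_nn)
  qed
  have CE: "dist_indep Xs {1..d} p T = (\<Sum>i\<in>{1..n}. dist_indep Xs (S i) (mu i) (mk i P))"
    unfolding C_eq sum_INF[OF order_refl]
    by (rule sum.cong[OF refl]) (rule E_eq[symmetric])
  have 1: "dist_indep Xs {1..d} p P = I_part Xs {1..d} p P S n + dist_indep Xs {1..d} p T"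
    unfolding B_eq by (rule AC)
  have 2: "dist_indep Xs {1..d} p P = I_part Xs {1..d} p P S n + (\<Sum>i\<in>{1..n}. dist_indep Xs (S i) (mu i) (mk i P))"
    unfolding 1 CE by (rule refl)
  show ?thesis using 1 2 unfolding T_def by (rule conjI)
qed

end

theorem corollary2p25:
  fixes Xs :: "nat \<Rightarrow> 'a set" and d n :: nat and S :: "nat \<Rightarrow> nat set"
    and p :: "(nat \<Rightarrow> 'a) \<Rightarrow> real" and P :: "(nat \<Rightarrow> 'a) \<Rightarrow> (nat \<Rightarrow> 'a) \<Rightarrow> real"
  assumes fin: "\<forall>j\<in>{1..d}. finite (Xs j)"
    and S_nonempty: "\<forall>i\<in>{1..n}. S i \<noteq> {}"
    and S_disjoint: "\<forall>i\<in>{1..n}. \<forall>k\<in>{1..n}. i \<noteq> k \<longrightarrow> S i \<inter> S k = {}"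
    and S_cover: "(\<Union>i\<in>{1..n}. S i) = {1..d}"
    and p_dist: "prob_dist (PiE {1..d} Xs) p"
    and p_pos: "\<forall>x\<in>PiE {1..d} Xs. 0 < p x"
    and P_tm: "transition_matrix (PiE {1..d} Xs) P"
  shows "dist_indep Xs {1..d} p P
           = I_part Xs {1..d} p P S n
             + dist_indep Xs {1..d} p (tensor S n (\<lambda>i. marg_kernel Xs {1..d} (S i) p P))
       \<and> dist_indep Xs {1..d} p P
           = I_part Xs {1..d} p P S n
             + (\<Sum>i\<in>{1..n}. dist_indep Xs (S i) (marginal Xs {1..d} (S i) p)
                                 (marg_kernel Xs {1..d} (S i) p P))"
proof -
  interpret blocks Xs d n S p by (rule blocks.intro[OF fin S_disjoint S_cover p_dist p_pos])
  show ?thesis by (rule main[OF P_tm])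
qed

end
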